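(* Let $\mathcal{S}=\partial\Omega$ where $\Omega\subset\mathbb{R}^n$ is a non-empty bounded open set with $C^k$ boundary, $k\ge 2$. Let $q\in\mathbb{R}^n\setminus\mathcal{S}$ and suppose that $m=|\Gamma(q)|<\infty$, with $\Gamma(q)=\{p_1,\dots,p_m\}$. Then there exist $r>\mathrm{dist}(q,\mathcal{S})$ and pairwise-disjoint connected closed subsets $S_1,\dots,S_m\subset\mathcal{S}$ with $$\overline{B}(q,r)\cap\mathcal{S}\supset\bigsqcup_{i=1}^m S_i,\qquad p_i\in\mathrm{int}_{\mathcal{S}}(S_i)\ \text{ for each } i,$$ where $\mathrm{int}_{\mathcal{S}}$ denotes interior in the induced topology of $\mathcal{S}$. Moreover, setting $\alpha_i=\mathrm{dist}(\cdot,S_i)$, there exists a neighborhood $N$ of $q$ such that $\mathrm{dist}(x,\mathcal{S})=\min_{i=1,\dots,m}\alpha_i(x)$ for all $x\in N$.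
   Context: For $A\subset\mathbb{R}^n$, $\mathrm{dist}(q,A)=\inf_{y\in A}\|q-y\|$. For $q\in\mathbb{R}^n$, $\Gamma(q)=\{p\in\mathcal{S}: \|q-p\|=\mathrm{dist}(q,\mathcal{S})\}$ is the set of contact (closest) points of $q$ on $\mathcal{S}$. *)

theory Defs
  imports "HOL-Analysis.Analysis"
begin

fun Ck_on :: "nat \<Rightarrow> 'a::euclidean_space set \<Rightarrow> ('a \<Rightarrow> real) \<Rightarrow> bool" where
  "Ck_on 0 U f = continuous_on U f"
| "Ck_on (Suc k) U f =
     (f differentiable_on U \<and>
      (\<forall>v. Ck_on k U (\<lambda>x. frechet_derivative f (at x) v)))"

text \<open>An open set has C^k boundary if near each boundary point it is, after a
  choice of unit direction v, the region strictly above the graph of a C^k function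
  defined on the hyperplane orthogonal to v (here g is C^k on the whole space and
  evaluated at the orthogonal projection onto that hyperplane).\<close>
definition Ck_boundary :: "nat \<Rightarrow> 'a::euclidean_space set \<Rightarrow> bool" where
  "Ck_boundary k \<Omega> \<longleftrightarrow>
     (\<forall>p\<in>frontier \<Omega>. \<exists>r>0. \<exists>v g. norm v = 1 \<and> Ck_on k UNIV g \<and>
        \<Omega> \<inter> ball p r = {x \<in> ball p r. g (x - (x \<bullet> v) *\<^sub>R v) < x \<bullet> v})"

definition contact_points :: "'a::metric_space set \<Rightarrow> 'a \<Rightarrow> 'a set" where
  "contact_points S q = {p \<in> S. dist q p = infdist q S}"

end

theory Submission imports Defs begin

lemma Ck_cont: "Ck_on k UNIV g \<Longrightarrow> k \<ge> 1 \<Longrightarrow> continuous_on UNIV g"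
  by (cases k) (auto intro: differentiable_imp_continuous_on)

lemma local_piece:
  fixes \<Omega> :: "'a::euclidean_space set"
  assumes "open \<Omega>" "k \<ge> 2" "Ck_boundary k \<Omega>" "p \<in> frontier \<Omega>" "\<epsilon> > 0"
  shows "\<exists>T. T \<subseteq> frontier \<Omega> \<and> connected T \<and> closed T \<and> T \<subseteq> cball p \<epsilon> \<and>
             p \<in> (top_of_set (frontier \<Omega>)) interior_of T"
proof -
  obtain r v g where r: "r > 0" and v: "norm v = 1" and g: "Ck_on k UNIV g"
    and loc: "\<Omega> \<inter> ball p r = {x \<in> ball p r. g (x - (x \<bullet> v) *\<^sub>R v) < x \<bullet> v}"
    using assms(3,4) unfolding Ck_boundary_def by blast
  define P where "P x = x - (x \<bullet> v) *\<^sub>R v" for x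
  have gc: "continuous_on UNIV g" using Ck_cont[OF g] assms(2) by simp
  have vv: "v \<bullet> v = 1" using v by (simp add: norm_eq_sqrt_inner)
  have Pc: "continuous_on UNIV P" unfolding P_def by (intro continuous_intros)
  have gPc: "continuous_on UNIV (\<lambda>x. g (P x))"
    using continuous_on_compose[OF Pc, of g] gc continuous_on_subset[OF gc] by (simp add: o_def)
  have fr: "frontier \<Omega> = closure \<Omega> - \<Omega>"
    using assms(1) by (simp add: frontier_def interior_open)
  have inO: "x \<in> \<Omega> \<longleftrightarrow> g (P x) < x \<bullet> v" if x: "x \<in> ball p r" for x
  proof -
    have "x \<in> \<Omega> \<inter> ball p r \<longleftrightarrow> x \<in> {x \<in> ball p r. g (x - (x \<bullet> v) *\<^sub>R v) < x \<bullet> v}"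
      by (simp only: loc)
    then show ?thesis using x unfolding P_def by blast
  qed
  have in_fr: "x \<in> frontier \<Omega> \<longleftrightarrow> g (P x) = x \<bullet> v" if x: "x \<in> ball p r" for x
  proof
    assume xf: "x \<in> frontier \<Omega>"
    then have "x \<notin> \<Omega>" using fr by auto
    then have ge: "g (P x) \<ge> x \<bullet> v" using inO[OF x] by auto
    show "g (P x) = x \<bullet> v"
    proof (rule ccontr)
      assume "g (P x) \<noteq> x \<bullet> v"
      then have gt: "g (P x) > x \<bullet> v" using ge by auto
      define U where "U = ball p r \<inter> {y. g (P y) - y \<bullet> v > 0}"
      have "open {y. g (P y) - y \<bullet> v > 0}"
        by (rule open_Collect_less[where f="\<lambda>_. 0", simplified]) 
           (intro continuous_on_diff gPc continuous_intros)
      then have oU: "open U" unfolding U_def by auto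
      have xU: "x \<in> U" using x gt unfolding U_def by auto
      have "U \<inter> \<Omega> = {}" using inO unfolding U_def by force
      moreover have "x \<in> closure \<Omega>" using xf fr by auto
      ultimately show False using oU xU
        using open_Int_closure_eq_empty[OF oU, of \<Omega>] by blast
    qed
  next
    assume eq: "g (P x) = x \<bullet> v"
    have "x \<notin> \<Omega>" using eq inO[OF x] by auto
    moreover have "x \<in> closure \<Omega>"
      unfolding closure_approachable
    proof (intro allI impI)
      fix e :: real assume e: "e > 0"
      define t where "t = min e (r - dist p x) / 2"
      have t: "t > 0" "t < e" "t < r - dist p x" using e x unfolding t_def by auto
      have d: "dist (x + t *\<^sub>R v) x = t" using v t by (simp add: dist_norm)
      have "dist p (x + t *\<^sub>R v) \<le> dist p x + dist x (x + t *\<^sub>R v)" by (rule dist_triangle)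
      then have b: "x + t *\<^sub>R v \<in> ball p r" using d t by (simp add: dist_commute)
      have "P (x + t *\<^sub>R v) = P x" unfolding P_def using vv
        by (simp add: inner_add_left algebra_simps)
      moreover have "(x + t *\<^sub>R v) \<bullet> v = x \<bullet> v + t" using vv by (simp add: inner_add_left)
      ultimately have "x + t *\<^sub>R v \<in> \<Omega>" using inO[OF b] eq t by auto
      then show "\<exists>y\<in>\<Omega>. dist y x < e" using d t(2) by (intro bexI[of _ "x + t *\<^sub>R v"]) simp_all
    qed
    ultimately show "x \<in> frontier \<Omega>" using fr by auto
  qed
  define \<psi> where "\<psi> x = P x + g (P x) *\<^sub>R v" for x
  have \<psi>c: "continuous_on UNIV \<psi>" unfolding \<psi>_def by (intro continuous_intros Pc gPc)
  have Pv: "P x \<bullet> v = 0" for x by (simp add: P_def inner_diff_left vv)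
  have \<psi>v: "\<psi> x \<bullet> v = g (P x)" for x unfolding \<psi>_def by (simp add: inner_add_left Pv vv)
  have P\<psi>: "P (\<psi> x) = P x" for x
  proof -
    have "P (\<psi> x) = \<psi> x - g (P x) *\<^sub>R v" using P_def[of "\<psi> x"] \<psi>v[of x] by simp
    also have "\<dots> = P x" unfolding \<psi>_def by simp
    finally show ?thesis .
  qed
  have \<psi>id: "\<psi> x = x" if "x \<in> frontier \<Omega>" "x \<in> ball p r" for x
    using in_fr[OF that(2)] that(1) unfolding \<psi>_def P_def by simp
  have pb: "p \<in> ball p r" using r by simp
  have \<psi>p: "\<psi> p = p" using \<psi>id[OF assms(4) pb] .
  define \<rho> where "\<rho> = min r \<epsilon>"
  have \<rho>: "\<rho> > 0" using r assms(5) unfolding \<rho>_def by simp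
  have "isCont \<psi> p" using \<psi>c by (simp add: continuous_on_eq_continuous_at)
  then obtain \<delta>0 where \<delta>0: "\<delta>0 > 0" "\<And>x. dist x p < \<delta>0 \<Longrightarrow> dist (\<psi> x) (\<psi> p) < \<rho>"
    using \<rho> unfolding continuous_at_eps_delta by blast
  define \<delta> where "\<delta> = min r \<delta>0 / 2"
  have \<delta>: "\<delta> > 0" "\<delta> < \<delta>0" "\<delta> < r" using r \<delta>0 unfolding \<delta>_def by auto
  define T where "T = \<psi> ` cball p \<delta>"
  have Tb: "T \<subseteq> ball p \<rho>"
  proof
    fix y assume "y \<in> T"
    then obtain x where x: "x \<in> cball p \<delta>" "y = \<psi> x" unfolding T_def by auto
    then have "dist x p < \<delta>0" using \<delta> by (simp add: dist_commute)
    then show "y \<in> ball p \<rho>" using \<delta>0(2) x \<psi>p by (simp add: dist_commute)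
  qed
  have "T \<subseteq> frontier \<Omega>"
  proof
    fix y assume y: "y \<in> T"
    then obtain x where x: "y = \<psi> x" unfolding T_def by auto
    have "y \<in> ball p r" using Tb y unfolding \<rho>_def by auto
    moreover have "g (P y) = y \<bullet> v" using x P\<psi> \<psi>v by simp
    ultimately show "y \<in> frontier \<Omega>" using in_fr by blast
  qed
  moreover have "connected T" unfolding T_def
    by (intro connected_continuous_image convex_connected convex_cball
        continuous_on_subset[OF \<psi>c]) auto
  moreover have "closed T" unfolding T_def
    by (intro compact_imp_closed compact_continuous_image compact_cball
        continuous_on_subset[OF \<psi>c]) auto
  moreover have "T \<subseteq> cball p \<epsilon>" using Tb unfolding \<rho>_def by auto
  moreover have "p \<in> (top_of_set (frontier \<Omega>)) interior_of T"
  proof -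
    have "openin (top_of_set (frontier \<Omega>)) (frontier \<Omega> \<inter> ball p \<delta>)"
      by (simp add: openin_open_Int)
    moreover have "frontier \<Omega> \<inter> ball p \<delta> \<subseteq> T"
    proof
      fix x assume x: "x \<in> frontier \<Omega> \<inter> ball p \<delta>"
      then have "\<psi> x = x" using \<psi>id \<delta> by auto
      then show "x \<in> T" using x unfolding T_def by (metis IntD2 ball_subset_cball image_eqI subsetD)
    qed
    moreover have "p \<in> frontier \<Omega> \<inter> ball p \<delta>" using assms(4) \<delta> by auto
    ultimately show ?thesis by (meson interior_of_maximal subsetD)
  qed
  ultimately show ?thesis by blast
qed


theorem lemma3p12:
  fixes \<Omega> :: "'a::euclidean_space set" and q :: 'a and k :: nat
  assumes "open \<Omega>" and "bounded \<Omega>" and "\<Omega> \<noteq> {}"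
    and "k \<ge> 2" and "Ck_boundary k \<Omega>"
    and "q \<notin> frontier \<Omega>"
    and "finite (contact_points (frontier \<Omega>) q)"
  shows "\<exists>r > infdist q (frontier \<Omega>). \<exists>T :: 'a \<Rightarrow> 'a set.
           (\<forall>p\<in>contact_points (frontier \<Omega>) q.
               T p \<subseteq> frontier \<Omega> \<and> connected (T p) \<and> closed (T p) \<and>
               T p \<subseteq> cball q r \<and>
               p \<in> (top_of_set (frontier \<Omega>)) interior_of (T p)) \<and>
           (\<forall>p\<in>contact_points (frontier \<Omega>) q. \<forall>p'\<in>contact_points (frontier \<Omega>) q.
               p \<noteq> p' \<longrightarrow> T p \<inter> T p' = {}) \<and>
           (\<exists>N. open N \<and> q \<in> N \<and>
               (\<forall>x\<in>N. infdist x (frontier \<Omega>) =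
                   Min ((\<lambda>p. infdist x (T p)) ` contact_points (frontier \<Omega>) q)))"
proof -
  define S where "S = frontier \<Omega>"
  define G where "G = contact_points S q"
  define d where "d = infdist q S"
  have fG: "finite G" using assms(7) unfolding G_def S_def .
  have clS: "closed S" unfolding S_def by simp
  have Sne: "S \<noteq> {}" unfolding S_def
    using frontier_not_empty[OF assms(3)] assms(2) not_bounded_UNIV by blast
  have Gd: "p \<in> G \<Longrightarrow> p \<in> S \<and> dist q p = d" for p unfolding G_def contact_points_def d_def by auto
  obtain p0 where "p0 \<in> S" "infdist q S = dist q p0" using infdist_attains_inf[OF clS Sne] by blast
  then have "p0 \<in> G" unfolding G_def contact_points_def by auto
  then have Gne: "G \<noteq> {}" by auto
  define D where "D = insert 1 ((\<lambda>(p, p'). dist p p') ` {(p, p'). p \<in> G \<and> p' \<in> G \<and> p \<noteq> p'})"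
  have fD: "finite D" unfolding D_def
    by (rule finite_insert[THEN iffD2], rule finite_imageI,
        rule finite_subset[of _ "G \<times> G"]) (auto simp: fG)
  have Dpos: "\<forall>x\<in>D. x > 0" unfolding D_def by auto
  define \<epsilon> where "\<epsilon> = Min D / 3"
  have \<epsilon>: "\<epsilon> > 0" unfolding \<epsilon>_def using fD Dpos by (simp add: D_def)
  have sep: "3 * \<epsilon> \<le> dist p p'" if "p \<in> G" "p' \<in> G" "p \<noteq> p'" for p p'
  proof -
    have "dist p p' \<in> D" unfolding D_def using that by auto
    then show ?thesis unfolding \<epsilon>_def using fD by simp
  qed
  have "\<forall>p\<in>G. \<exists>T. T \<subseteq> S \<and> connected T \<and> closed T \<and> T \<subseteq> cball p \<epsilon> \<and>
             p \<in> (top_of_set S) interior_of T"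
    using local_piece[OF assms(1,4,5) _ \<epsilon>] Gd unfolding S_def by blast
  then obtain T where T: "\<And>p. p \<in> G \<Longrightarrow> T p \<subseteq> S \<and> connected (T p) \<and> closed (T p) \<and>
       T p \<subseteq> cball p \<epsilon> \<and> p \<in> (top_of_set S) interior_of (T p)"
    by metis
  define r where "r = d + \<epsilon> + 1"
  have r: "r > d" unfolding r_def using \<epsilon> by simp
  have Tr: "T p \<subseteq> cball q r" if "p \<in> G" for p
  proof
    fix x assume "x \<in> T p"
    then have "dist p x \<le> \<epsilon>" using T[OF that] by auto
    moreover have "dist q x \<le> dist q p + dist p x" by (rule dist_triangle)
    ultimately show "x \<in> cball q r" using Gd[OF that] unfolding r_def by simp
  qed
  have disj: "T p \<inter> T p' = {}" if "p \<in> G" "p' \<in> G" "p \<noteq> p'" for p p'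
  proof (rule ccontr)
    assume "T p \<inter> T p' \<noteq> {}"
    then obtain x where "x \<in> T p" "x \<in> T p'" by auto
    then have "dist p x \<le> \<epsilon>" "dist p' x \<le> \<epsilon>" using T[OF that(1)] T[OF that(2)] by auto
    moreover have "dist p p' \<le> dist p x + dist p' x" by (metis dist_commute dist_triangle)
    ultimately show False using sep[OF that] \<epsilon> by simp
  qed
  have pT: "p \<in> T p" if "p \<in> G" for p
    using T[OF that] interior_of_subset[of "top_of_set S" "T p"] by (meson subsetD)
  define Op where "Op p = (top_of_set S) interior_of (T p)" for p
  define C where "C = S - (\<Union>p\<in>G. Op p)"
  have "closedin (top_of_set S) C" unfolding C_def Op_def
    by (intro closedin_diff closedin_topspace[of "top_of_set S", simplified]
        openin_Union) auto
  then have clC: "closed C" using clS closedin_closed_trans by blast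
  obtain \<eta> where \<eta>: "\<eta> > 0" "\<And>c. c \<in> C \<Longrightarrow> dist q c \<ge> d + \<eta>"
  proof (cases "C = {}")
    case True then show ?thesis using that[of 1] by auto
  next
    case False
    obtain c0 where c0: "c0 \<in> C" "infdist q C = dist q c0" using infdist_attains_inf[OF clC False] by blast
    have "c0 \<in> S" using c0 unfolding C_def by auto
    then have "dist q c0 \<ge> d" unfolding d_def by (rule infdist_le)
    moreover have "c0 \<notin> G" using c0(1) T unfolding C_def Op_def by blast
    then have "dist q c0 \<noteq> d" using \<open>c0 \<in> S\<close> unfolding G_def contact_points_def d_def by auto
    ultimately have "infdist q C - d > 0" using c0 by simp
    moreover have "dist q c \<ge> d + (infdist q C - d)" if "c \<in> C" for c using infdist_le[OF that, of q] by simp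
    ultimately show ?thesis using that by blast
  qed
  have Nprop: "infdist x S = Min ((\<lambda>p. infdist x (T p)) ` G)" if x: "x \<in> ball q (\<eta>/2)" for x
  proof -
    obtain s where s: "s \<in> S" "infdist x S = dist x s" using infdist_attains_inf[OF clS Sne] by blast
    have "infdist x S \<le> infdist q S + dist x q" by (rule infdist_triangle)
    then have "dist x s < d + \<eta>/2" using s x unfolding d_def by (simp add: dist_commute)
    moreover have "dist q s \<le> dist q x + dist x s" by (rule dist_triangle)
    ultimately have "dist q s < d + \<eta>" using x by simp
    then have "s \<notin> C" using \<eta>(2) by force
    then obtain p where p: "p \<in> G" "s \<in> Op p" using s unfolding C_def by auto
    then have "s \<in> T p" unfolding Op_def using interior_of_subset[of "top_of_set S" "T p"] by (meson subsetD)
    then have "infdist x (T p) \<le> infdist x S" using s infdist_le by metis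
    moreover have "Min ((\<lambda>p. infdist x (T p)) ` G) \<le> infdist x (T p)"
      using fG p by simp
    moreover have "infdist x S \<le> Min ((\<lambda>p. infdist x (T p)) ` G)"
      using fG Gne T pT by (auto intro!: infdist_mono) blast
    ultimately show ?thesis by linarith
  qed
  show ?thesis
    unfolding S_def[symmetric] G_def[symmetric] d_def[symmetric]
    apply (rule exI[of _ r], intro conjI r)
    apply (rule exI[of _ T], intro conjI)
    using T Tr apply blast
    using disj apply blast
    apply (rule exI[of _ "ball q (\<eta>/2)"])
    using Nprop \<eta> by auto
qed

end
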